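(* If $\Gamma\Vdash t:A$ is derivable in the type system $\lambda 2^{la}$, then $t$ is strongly normalising (for the reduction $\to$ of Lineal).
   Context: Fix a commutative ring $(\mathcal{S},+,\times)$ of scalars. Terms of the linear-algebraic $\lambda$-calculus (Lineal): $t,r,u ::= b \mid (t)\,r \mid \mathbf{0} \mid \alpha.t \mid t+r$, with basis terms $b ::= x \mid \lambda x\,t$. Terms are considered modulo associativity and commutativity of $+$. Substitution $t[b/x]$ is capture-avoiding, with $(\alpha.t+\beta.u)[b/x]=\alpha.(t[b/x])+\beta.(u[b/x])$. One-step reduction $\to$ is the closure under term contexts (modulo AC of $+$) of: $t+\mathbf 0\to t$; $0.t\to\mathbf 0$; $1.t\to t$; $\alpha.\mathbf 0\to\mathbf 0$; $\alpha.(\beta.t)\to(\alpha\times\beta).t$; $\alpha.(t+r)\to\alpha.t+\alpha.r$; $\alpha.t+\beta.t\to(\alpha+\beta).t$, $\alpha.t+t\to(\alpha+1).t$, $t+t\to(1+1).t$ (only if $t$ is a closed normal term); $(t+r)\,u\to(t)\,u+(r)\,u$ and $(u)\,(t+r)\to(u)\,t+(u)\,r$ (only if $t+r$ is a closed normal term); $(\alpha.t)\,r\to\alpha.(t)\,r$ and $(r)\,(\alpha.t)\to\alpha.(r)\,t$ (only if $t$ is a closed normal term); $(\mathbf 0)\,t\to\mathbf 0$; $(t)\,\mathbf 0\to\mathbf 0$; $(\lambda x\,t)\,b\to t[b/x]$ (only if $b$ is a basis term). The type system $\lambda 2^{la}$ has types $A,B ::= X \mid A\to B \mid \forall X.A$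 and contexts $\Gamma$ assigning such types to distinct term variables. Its rules are those of System F: $\Gamma,x:A\Vdash x:A$; from $\Gamma,x:A\Vdash t:B$ infer $\Gamma\Vdash\lambda x\,t:A\to B$; from $\Gamma\Vdash t:A\to B$ and $\Gamma\Vdash r:A$ infer $\Gamma\Vdash (t)\,r:B$; from $\Gamma\Vdash t:\forall X.A$ infer $\Gamma\Vdash t:A[B/X]$; from $\Gamma\Vdash t:A$ with $X$ not free in $\Gamma$ infer $\Gamma\Vdash t:\forall X.A$; together with: $\Gamma\Vdash\mathbf 0:A$ for any $A$; from $\Gamma\Vdash t:A$ and $\Gamma\Vdash r:A$ infer $\Gamma\Vdash t+r:A$; from $\Gamma\Vdash t:A$ infer $\Gamma\Vdash\alpha.t:A$ for any $\alpha\in\mathcal S$. *)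

theory Defs
  imports Main
begin

datatype ty = TVar nat | Arr ty ty | All ty

fun liftT :: "nat \<Rightarrow> ty \<Rightarrow> ty" where
  "liftT k (TVar i) = (if i < k then TVar i else TVar (Suc i))"
| "liftT k (Arr A B) = Arr (liftT k A) (liftT k B)"
| "liftT k (All A) = All (liftT (Suc k) A)"

fun substT :: "ty \<Rightarrow> nat \<Rightarrow> ty \<Rightarrow> ty" where
  "substT (TVar i) k B = (if i < k then TVar i else if i = k then B else TVar (i - 1))"
| "substT (Arr A C) k B = Arr (substT A k B) (substT C k B)"
| "substT (All A) k B = All (substT A (Suc k) (liftT 0 B))"

datatype 's tm = Var nat | Lam "'s tm" | App "'s tm" "'s tm" | Zero
  | Scal 's "'s tm" | Plus "'s tm" "'s tm"

fun basis :: "'s tm \<Rightarrow> bool" where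
  "basis (Var i) = True"
| "basis (Lam t) = True"
| "basis _ = False"

fun lift :: "'s tm \<Rightarrow> nat \<Rightarrow> 's tm" where
  "lift (Var i) k = (if i < k then Var i else Var (Suc i))"
| "lift (Lam t) k = Lam (lift t (Suc k))"
| "lift (App t r) k = App (lift t k) (lift r k)"
| "lift Zero k = Zero"
| "lift (Scal a t) k = Scal a (lift t k)"
| "lift (Plus t r) k = Plus (lift t k) (lift r k)"

fun subst :: "'s tm \<Rightarrow> 's tm \<Rightarrow> nat \<Rightarrow> 's tm" where
  "subst (Var i) s k = (if k < i then Var (i - 1) else if i = k then s else Var i)"
| "subst (Lam t) s k = Lam (subst t (lift s 0) (Suc k))"
| "subst (App t r) s k = App (subst t s k) (subst r s k)"
| "subst Zero s k = Zero"
| "subst (Scal a t) s k = Scal a (subst t s k)"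
| "subst (Plus t r) s k = Plus (subst t s k) (subst r s k)"

fun closedAt :: "nat \<Rightarrow> 's tm \<Rightarrow> bool" where
  "closedAt k (Var i) = (i < k)"
| "closedAt k (Lam t) = closedAt (Suc k) t"
| "closedAt k (App t r) = (closedAt k t \<and> closedAt k r)"
| "closedAt k Zero = True"
| "closedAt k (Scal a t) = closedAt k t"
| "closedAt k (Plus t r) = (closedAt k t \<and> closedAt k r)"

definition closed :: "'s tm \<Rightarrow> bool" where
  "closed t = closedAt 0 t"

fun tsize :: "'s tm \<Rightarrow> nat" where
  "tsize (Var i) = 1"
| "tsize (Lam t) = Suc (tsize t)"
| "tsize (App t r) = Suc (tsize t + tsize r)"
| "tsize Zero = 1"
| "tsize (Scal a t) = Suc (tsize t)"
| "tsize (Plus t r) = Suc (tsize t + tsize r)"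

inductive ac :: "'s tm \<Rightarrow> 's tm \<Rightarrow> bool" where
  ac_refl: "ac t t"
| ac_sym: "ac t r \<Longrightarrow> ac r t"
| ac_trans: "ac t r \<Longrightarrow> ac r u \<Longrightarrow> ac t u"
| ac_assoc: "ac (Plus (Plus t r) u) (Plus t (Plus r u))"
| ac_comm: "ac (Plus t r) (Plus r t)"
| ac_Lam: "ac t r \<Longrightarrow> ac (Lam t) (Lam r)"
| ac_App: "ac t t' \<Longrightarrow> ac r r' \<Longrightarrow> ac (App t r) (App t' r')"
| ac_Scal: "ac t r \<Longrightarrow> ac (Scal a t) (Scal a r)"
| ac_Plus: "ac t t' \<Longrightarrow> ac r r' \<Longrightarrow> ac (Plus t r) (Plus t' r')"

section \<open>Reduction, parametrised by the predicate P = "is a closed normal term"\<close>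

inductive head_red :: "('s::comm_ring_1 tm \<Rightarrow> bool) \<Rightarrow> 's tm \<Rightarrow> 's tm \<Rightarrow> bool"
  for P where
  r_plus0: "head_red P (Plus t Zero) t"
| r_scal0: "head_red P (Scal 0 t) Zero"
| r_scal1: "head_red P (Scal 1 t) t"
| r_scalZ: "head_red P (Scal a Zero) Zero"
| r_scalscal: "head_red P (Scal a (Scal b t)) (Scal (a * b) t)"
| r_scalplus: "head_red P (Scal a (Plus t r)) (Plus (Scal a t) (Scal a r))"
| r_fact: "P t \<Longrightarrow> head_red P (Plus (Scal a t) (Scal b t)) (Scal (a + b) t)"
| r_fact1: "P t \<Longrightarrow> head_red P (Plus (Scal a t) t) (Scal (a + 1) t)"
| r_fact2: "P t \<Longrightarrow> head_red P (Plus t t) (Scal (1 + 1) t)"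
| r_distl: "P (Plus t r) \<Longrightarrow> head_red P (App (Plus t r) u) (Plus (App t u) (App r u))"
| r_distr: "P (Plus t r) \<Longrightarrow> head_red P (App u (Plus t r)) (Plus (App u t) (App u r))"
| r_scall: "P t \<Longrightarrow> head_red P (App (Scal a t) r) (Scal a (App t r))"
| r_scalr: "P t \<Longrightarrow> head_red P (App r (Scal a t)) (Scal a (App r t))"
| r_zerol: "head_red P (App Zero t) Zero"
| r_zeror: "head_red P (App t Zero) Zero"
| r_beta: "basis b \<Longrightarrow> head_red P (App (Lam t) b) (subst t b 0)"

inductive ctx_red :: "('s::comm_ring_1 tm \<Rightarrow> bool) \<Rightarrow> 's tm \<Rightarrow> 's tm \<Rightarrow> bool"
  for P where
  c_head: "head_red P t r \<Longrightarrow> ctx_red P t r"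
| c_Lam: "ctx_red P t r \<Longrightarrow> ctx_red P (Lam t) (Lam r)"
| c_AppL: "ctx_red P t r \<Longrightarrow> ctx_red P (App t u) (App r u)"
| c_AppR: "ctx_red P t r \<Longrightarrow> ctx_red P (App u t) (App u r)"
| c_Scal: "ctx_red P t r \<Longrightarrow> ctx_red P (Scal a t) (Scal a r)"
| c_PlusL: "ctx_red P t r \<Longrightarrow> ctx_red P (Plus t u) (Plus r u)"
| c_PlusR: "ctx_red P t r \<Longrightarrow> ctx_red P (Plus u t) (Plus u r)"

definition step :: "('s::comm_ring_1 tm \<Rightarrow> bool) \<Rightarrow> 's tm \<Rightarrow> 's tm \<Rightarrow> bool" where
  "step P t r = (\<exists>t' r'. ac t t' \<and> ctx_red P t' r' \<and> ac r' r)"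

text \<open>The side conditions of every rule only query "closed normal" for terms strictly
  smaller than the reducing term, so the (self-referential) definition is stratified by
  size: cnf_upto n decides "closed normal" correctly for all terms of size < n.\<close>
fun cnf_upto :: "nat \<Rightarrow> 's::comm_ring_1 tm \<Rightarrow> bool" where
  "cnf_upto 0 u = False"
| "cnf_upto (Suc n) u =
     (if tsize u < n then cnf_upto n u
      else tsize u = n \<and> closed u \<and> \<not> (\<exists>r. step (cnf_upto n) u r))"

definition closed_normal :: "'s::comm_ring_1 tm \<Rightarrow> bool" where
  "closed_normal u = cnf_upto (Suc (tsize u)) u"

definition red :: "'s::comm_ring_1 tm \<Rightarrow> 's tm \<Rightarrow> bool" where
  "red t r = step closed_normal t r"

definition SN :: "'s::comm_ring_1 tm \<Rightarrow> bool" where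
  "SN t = (\<not> (\<exists>f. f 0 = t \<and> (\<forall>i. red (f i) (f (Suc i)))))"

inductive typing :: "ty list \<Rightarrow> 's tm \<Rightarrow> ty \<Rightarrow> bool" where
  t_var: "i < length \<Gamma> \<Longrightarrow> typing \<Gamma> (Var i) (\<Gamma> ! i)"
| t_lam: "typing (A # \<Gamma>) t B \<Longrightarrow> typing \<Gamma> (Lam t) (Arr A B)"
| t_app: "typing \<Gamma> t (Arr A B) \<Longrightarrow> typing \<Gamma> r A \<Longrightarrow> typing \<Gamma> (App t r) B"
| t_allE: "typing \<Gamma> t (All A) \<Longrightarrow> typing \<Gamma> t (substT A 0 B)"
| t_allI: "typing (map (liftT 0) \<Gamma>) t A \<Longrightarrow> typing \<Gamma> t (All A)"
| t_zero: "typing \<Gamma> Zero A"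
| t_plus: "typing \<Gamma> t A \<Longrightarrow> typing \<Gamma> r A \<Longrightarrow> typing \<Gamma> (Plus t r) A"
| t_scal: "typing \<Gamma> t A \<Longrightarrow> typing \<Gamma> (Scal a t) A"

end

theory Submission
  imports Defs "HOL-Library.Multiset"
begin

abbreviation RR :: "'s::comm_ring_1 tm \<Rightarrow> 's tm \<Rightarrow> bool" where
  "RR \<equiv> step (\<lambda>_. True)"

lemma ac_equivp: "equivp ac"
  by (rule equivpI) (auto simp: reflp_def symp_def transp_def intro: ac_refl ac_sym ac_trans)

fun hc :: "'s tm \<Rightarrow> nat" where
  "hc (Var i) = 0" | "hc (Lam t) = 1" | "hc (App t u) = 2" | "hc Zero = 3"
| "hc (Scal a t) = 4" | "hc (Plus t u) = 5"

lemma ac_hc: "ac x y \<Longrightarrow> hc x = hc y"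
  by (induction rule: ac.induct) auto

lemma ac_tsize: "ac x y \<Longrightarrow> tsize x = tsize y"
  by (induction rule: ac.induct) auto

lemma ac_Var_aux: "ac x y \<Longrightarrow> (x = Var i \<longrightarrow> y = Var i) \<and> (y = Var i \<longrightarrow> x = Var i)"
proof (induction rule: ac.induct)
  case (ac_sym t r) thus ?case by (simp only: conj_commute)
next
  case (ac_trans t r u) thus ?case by (metis)
qed simp_all

lemma ac_VarD: "ac (Var i) y \<Longrightarrow> y = Var i"
  using ac_Var_aux by blast

lemma ac_ZeroD: "ac Zero y \<Longrightarrow> y = Zero"
  using ac_hc[of Zero y] by (cases y) auto

lemma ac_Lam_aux: "ac x y \<Longrightarrow> (\<forall>a. x = Lam a \<longrightarrow> (\<exists>b. y = Lam b \<and> ac a b)) \<and> (\<forall>b. y = Lam b \<longrightarrow> (\<exists>a. x = Lam a \<and> ac a b))"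
proof (induction rule: ac.induct)
  case (ac_refl t) show ?case by (blast intro: ac.ac_refl)
next
  case (ac_sym t r) thus ?case by (blast intro: ac.ac_sym)
next
  case (ac_trans t r u)
  show ?case
  proof (intro conjI allI impI)
    fix a assume "t = Lam a"
    then obtain b where "r = Lam b" "ac a b" using ac_trans.IH(1) by blast
    then obtain c where "u = Lam c" "ac b c" using ac_trans.IH(2) by blast
    then show "\<exists>c. u = Lam c \<and> ac a c" using \<open>ac a b\<close> ac.ac_trans by blast
  next
    fix c assume "u = Lam c"
    then obtain b where "r = Lam b" "ac b c" using ac_trans.IH(2) by blast
    then obtain a where "t = Lam a" "ac a b" using ac_trans.IH(1) by blast
    then show "\<exists>a. t = Lam a \<and> ac a c" using \<open>ac b c\<close> ac.ac_trans by blast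
  qed
next
  case (ac_Lam t r) thus ?case by simp
qed simp_all

lemma ac_LamD: "ac (Lam a) y \<Longrightarrow> \<exists>b. y = Lam b \<and> ac a b"
  using ac_Lam_aux by blast

lemma ac_App_aux: "ac x y \<Longrightarrow> (\<forall>a c. x = App a c \<longrightarrow> (\<exists>b d. y = App b d \<and> ac a b \<and> ac c d)) \<and> (\<forall>b d. y = App b d \<longrightarrow> (\<exists>a c. x = App a c \<and> ac a b \<and> ac c d))"
proof (induction rule: ac.induct)
  case (ac_refl t) show ?case by (blast intro: ac.ac_refl)
next
  case (ac_sym t r) thus ?case by (blast intro: ac.ac_sym)
next
  case (ac_trans t r u)
  show ?case
  proof (intro conjI allI impI)
    fix a c assume "t = App a c"
    then obtain b d where "r = App b d" "ac a b" "ac c d" using ac_trans.IH(1) by blast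
    then obtain b' d' where "u = App b' d'" "ac b b'" "ac d d'" using ac_trans.IH(2) by blast
    then show "\<exists>b d. u = App b d \<and> ac a b \<and> ac c d" using \<open>ac a b\<close> \<open>ac c d\<close> ac.ac_trans by blast
  next
    fix b' d' assume "u = App b' d'"
    then obtain b d where "r = App b d" "ac b b'" "ac d d'" using ac_trans.IH(2) by blast
    then obtain a c where "t = App a c" "ac a b" "ac c d" using ac_trans.IH(1) by blast
    then show "\<exists>a c. t = App a c \<and> ac a b' \<and> ac c d'" using \<open>ac b b'\<close> \<open>ac d d'\<close> ac.ac_trans by blast
  qed
next
  case (ac_App t t' r r') thus ?case by simp
qed simp_all

lemma ac_AppD: "ac (App a c) y \<Longrightarrow> \<exists>b d. y = App b d \<and> ac a b \<and> ac c d"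
  using ac_App_aux by blast

lemma head_red_mono: "head_red P t r \<Longrightarrow> (\<And>x. P x \<Longrightarrow> Q x) \<Longrightarrow> head_red Q t r"
  by (induction rule: head_red.induct) (blast intro: head_red.intros)+

lemma ctx_red_mono: "ctx_red P t r \<Longrightarrow> (\<And>x. P x \<Longrightarrow> Q x) \<Longrightarrow> ctx_red Q t r"
  by (induction rule: ctx_red.induct) (blast intro: ctx_red.intros head_red_mono)+

lemma red_RR: "red t r \<Longrightarrow> RR t r"
proof -
  assume "red t r"
  then obtain x y where "ac t x" "ctx_red closed_normal x y" "ac y r" unfolding red_def step_def by blast
  moreover have "ctx_red (\<lambda>_. True) x y" using ctx_red_mono[OF \<open>ctx_red closed_normal x y\<close>] by simp
  ultimately show ?thesis unfolding step_def by blast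
qed

lemma RR_acL: "ac t t' \<Longrightarrow> RR t' r \<Longrightarrow> RR t r"
proof -
  assume a: "ac t t'" "RR t' r"
  then obtain x y where "ac t' x" "ctx_red (\<lambda>_. True) x y" "ac y r" unfolding step_def by blast
  moreover have "ac t x" using a(1) \<open>ac t' x\<close> by (rule ac_trans)
  ultimately show ?thesis unfolding step_def by blast
qed

lemma RR_acR: "RR t r \<Longrightarrow> ac r r' \<Longrightarrow> RR t r'"
proof -
  assume a: "RR t r" "ac r r'"
  then obtain x y where "ac t x" "ctx_red (\<lambda>_. True) x y" "ac y r" unfolding step_def by blast
  moreover have "ac y r'" using \<open>ac y r\<close> a(2) by (rule ac_trans)
  ultimately show ?thesis unfolding step_def by blast
qed

lemma RR_ctx:
  assumes "RR t r"
  shows "RR (Lam t) (Lam r)" "RR (App t u) (App r u)" "RR (App u t) (App u r)"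
    "RR (Scal a t) (Scal a r)" "RR (Plus t u) (Plus r u)" "RR (Plus u t) (Plus u r)"
proof -
  obtain x y where xy: "ac t x" "ctx_red (\<lambda>_. True) x y" "ac y r" using assms unfolding step_def by blast
  show "RR (Lam t) (Lam r)" unfolding step_def
    using ac_Lam[OF xy(1)] c_Lam[OF xy(2)] ac_Lam[OF xy(3)] by blast
  show "RR (App t u) (App r u)" unfolding step_def
    using ac_App[OF xy(1) ac_refl] c_AppL[OF xy(2)] ac_App[OF xy(3) ac_refl] by blast
  show "RR (App u t) (App u r)" unfolding step_def
    using ac_App[OF ac_refl xy(1)] c_AppR[OF xy(2)] ac_App[OF ac_refl xy(3)] by blast
  show "RR (Scal a t) (Scal a r)" unfolding step_def
    using ac_Scal[OF xy(1)] c_Scal[OF xy(2)] ac_Scal[OF xy(3)] by blast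
  show "RR (Plus t u) (Plus r u)" unfolding step_def
    using ac_Plus[OF xy(1) ac_refl] c_PlusL[OF xy(2)] ac_Plus[OF xy(3) ac_refl] by blast
  show "RR (Plus u t) (Plus u r)" unfolding step_def
    using ac_Plus[OF ac_refl xy(1)] c_PlusR[OF xy(2)] ac_Plus[OF ac_refl xy(3)] by blast
qed

lemma RR_head: "head_red (\<lambda>_. True) t r \<Longrightarrow> RR t r"
  unfolding step_def using ac_refl c_head by blast

lemma RR_Var: "\<not> RR (Var i) r"
  unfolding step_def
  by (auto dest!: ac_VarD elim: ctx_red.cases head_red.cases)

lemma RR_Zero: "\<not> RR Zero r"
  unfolding step_def
  by (auto dest!: ac_ZeroD elim: ctx_red.cases head_red.cases)

lemma RR_LamD: "RR (Lam t) r \<Longrightarrow> \<exists>t'. RR t t' \<and> ac (Lam t') r"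
  unfolding step_def
  apply (auto dest!: ac_LamD)
  apply (erule ctx_red.cases; auto elim: head_red.cases)
  using ac_refl apply blast
  done

lemma app_ctx_cases:
  assumes "ctx_red (\<lambda>_. True) (App t0 u0) r1"
  shows "(\<exists>t'. ctx_red (\<lambda>_. True) t0 t' \<and> r1 = App t' u0) \<or>
   (\<exists>u'. ctx_red (\<lambda>_. True) u0 u' \<and> r1 = App t0 u') \<or>
   (\<exists>t1 t2. t0 = Plus t1 t2 \<and> r1 = Plus (App t1 u0) (App t2 u0)) \<or>
   (\<exists>u1 u2. u0 = Plus u1 u2 \<and> r1 = Plus (App t0 u1) (App t0 u2)) \<or>
   (\<exists>a t1. t0 = Scal a t1 \<and> r1 = Scal a (App t1 u0)) \<or>
   (\<exists>a u1. u0 = Scal a u1 \<and> r1 = Scal a (App t0 u1)) \<or>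
   (t0 = Zero \<and> r1 = Zero) \<or> (u0 = Zero \<and> r1 = Zero) \<or>
   (\<exists>t1. t0 = Lam t1 \<and> basis u0 \<and> r1 = subst t1 u0 0)"
  using assms
proof (cases rule: ctx_red.cases)
  case c_head
  from c_head(1) show ?thesis by (cases rule: head_red.cases) blast+
qed blast+

lemma app_red_cases:
  assumes "RR (App t u) r"
  shows "(\<exists>t'. RR t t' \<and> ac (App t' u) r) \<or>
   (\<exists>u'. RR u u' \<and> ac (App t u') r) \<or>
   (\<exists>t1 t2. ac t (Plus t1 t2) \<and> ac (Plus (App t1 u) (App t2 u)) r) \<or>
   (\<exists>u1 u2. ac u (Plus u1 u2) \<and> ac (Plus (App t u1) (App t u2)) r) \<or>
   (\<exists>a t1. ac t (Scal a t1) \<and> ac (Scal a (App t1 u)) r) \<or>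
   (\<exists>a u1. ac u (Scal a u1) \<and> ac (Scal a (App t u1)) r) \<or>
   (ac t Zero \<and> ac Zero r) \<or> (ac u Zero \<and> ac Zero r) \<or>
   (\<exists>t1 b. ac t (Lam t1) \<and> ac u b \<and> basis b \<and> ac (subst t1 b 0) r)"
proof -
  obtain x r1 where x: "ac (App t u) x" "ctx_red (\<lambda>_. True) x r1" "ac r1 r"
    using assms unfolding step_def by blast
  obtain t0 u0 where tu: "x = App t0 u0" "ac t t0" "ac u u0" using ac_AppD[OF x(1)] by blast
  have tr: "\<And>a b c. ac a b \<Longrightarrow> ac b c \<Longrightarrow> ac a c" by (rule ac_trans)
  have RRI: "\<And>a b c. ac a b \<Longrightarrow> ctx_red (\<lambda>_. True) b c \<Longrightarrow> RR a c"
    unfolding step_def using ac_refl by blast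
  have Au: "\<And>v. ac (App v u) (App v u0)" using ac_App[OF ac_refl tu(3)] .
  have At: "\<And>v. ac (App t v) (App t0 v)" using ac_App[OF tu(2) ac_refl] .
  from app_ctx_cases[OF x(2)[unfolded tu(1)]] show ?thesis
  proof (elim disjE exE conjE)
    fix t' assume a: "ctx_red (\<lambda>_. True) t0 t'" "r1 = App t' u0"
    have "RR t t'" by (rule RRI[OF tu(2) a(1)])
    moreover have "ac (App t' u) r" using tr[OF Au x(3)[unfolded a(2)]] .
    ultimately show ?thesis by blast
  next
    fix u' assume a: "ctx_red (\<lambda>_. True) u0 u'" "r1 = App t0 u'"
    have "RR u u'" by (rule RRI[OF tu(3) a(1)])
    moreover have "ac (App t u') r" using tr[OF At x(3)[unfolded a(2)]] .
    ultimately show ?thesis by blast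
  next
    fix t1 t2 assume a: "t0 = Plus t1 t2" "r1 = Plus (App t1 u0) (App t2 u0)"
    have "ac (Plus (App t1 u) (App t2 u)) r" using tr[OF ac_Plus[OF Au Au] x(3)[unfolded a(2)]] .
    then show ?thesis using tu(2) a(1) by blast
  next
    fix t1 t2 assume a: "u0 = Plus t1 t2" "r1 = Plus (App t0 t1) (App t0 t2)"
    have "ac (Plus (App t t1) (App t t2)) r" using tr[OF ac_Plus[OF At At] x(3)[unfolded a(2)]] .
    then show ?thesis using tu(3) a(1) by blast
  next
    fix b t1 assume a: "t0 = Scal b t1" "r1 = Scal b (App t1 u0)"
    have "ac (Scal b (App t1 u)) r" using tr[OF ac_Scal[OF Au] x(3)[unfolded a(2)]] .
    then show ?thesis using tu(2) a(1) by blast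
  next
    fix b t1 assume a: "u0 = Scal b t1" "r1 = Scal b (App t0 t1)"
    have "ac (Scal b (App t t1)) r" using tr[OF ac_Scal[OF At] x(3)[unfolded a(2)]] .
    then show ?thesis using tu(3) a(1) by blast
  next
    assume a: "t0 = Zero" "r1 = Zero"
    then show ?thesis using tu(2) x(3) by blast
  next
    assume a: "u0 = Zero" "r1 = Zero"
    then show ?thesis using tu(3) x(3) by blast
  next
    fix t1 assume a: "t0 = Lam t1" "basis u0" "r1 = subst t1 u0 0"
    then show ?thesis using tu(2,3) x(3) by blast
  qed
qed

section \<open>Substitution lemmas (as in Nipkow's Lambda)\<close>

lemma lift_lift: "i < k + 1 \<Longrightarrow> lift (lift t i) (Suc k) = lift (lift t k) i"
  by (induct t arbitrary: i k) auto

lemma lift_subst [simp]: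
  "j < i + 1 \<Longrightarrow> lift (subst t s j) i = subst (lift t (i + 1)) (lift s i) j"
  by (induct t arbitrary: i j s) (simp_all add: diff_Suc lift_lift split: nat.split)

lemma lift_subst_lt:
  "i < j + 1 \<Longrightarrow> lift (subst t s j) i = subst (lift t i) (lift s i) (j + 1)"
  by (induct t arbitrary: i j s) (auto simp: lift_lift)

lemma subst_lift [simp]: "subst (lift t k) s k = t"
  by (induct t arbitrary: k s) simp_all

lemma subst_subst:
  "i < j + 1 \<Longrightarrow> subst (subst t (lift v i) (Suc j)) (subst u v j) i = subst (subst t u i) v j"
  by (induct t arbitrary: i j u v)
    (simp_all add: diff_Suc lift_lift [symmetric] lift_subst_lt split: nat.split)

lemma basis_lift: "basis b \<Longrightarrow> basis (lift b k)"
  by (cases b) auto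

lemma basis_subst: "basis b \<Longrightarrow> basis s \<Longrightarrow> basis (subst b s k)"
  by (cases b) auto

lemma ac_subst: "ac t r \<Longrightarrow> ac (subst t s k) (subst r s k)"
proof (induction arbitrary: s k rule: ac.induct)
  case (ac_sym t r) show ?case by (rule ac.ac_sym[OF ac_sym.IH])
next
  case (ac_trans t r u) show ?case by (rule ac.ac_trans[OF ac_trans.IH(1) ac_trans.IH(2)])
next
  case (ac_Lam t r) show ?case by (simp add: ac.ac_Lam ac_Lam.IH)
next
  case (ac_App t t' r r') show ?case by (simp add: ac.ac_App ac_App.IH)
next
  case (ac_Scal t r) show ?case by (simp add: ac.ac_Scal ac_Scal.IH)
next
  case (ac_Plus t t' r r') show ?case by (simp add: ac.ac_Plus ac_Plus.IH)
qed (simp_all add: ac.ac_refl ac.ac_assoc ac.ac_comm)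

lemma head_subst: "head_red (\<lambda>_. True) t r \<Longrightarrow> basis s \<Longrightarrow> head_red (\<lambda>_. True) (subst t s k) (subst r s k)"
proof (induction rule: head_red.induct)
  case (r_beta b t)
  have "subst (subst t b 0) s k = subst (subst t (lift s 0) (Suc k)) (subst b s k) 0"
    using subst_subst[of 0 k t s b] by simp
  then show ?case using r_beta by (simp add: head_red.r_beta basis_subst)
next
  case (r_fact2 t)
  show ?case using head_red.r_fact2[of "\<lambda>_. True" "subst t s k"] by simp
qed (auto intro: head_red.intros)

lemma ctx_subst: "ctx_red (\<lambda>_. True) t r \<Longrightarrow> basis s \<Longrightarrow> ctx_red (\<lambda>_. True) (subst t s k) (subst r s k)"
  by (induction arbitrary: s k rule: ctx_red.induct)
    (auto intro: ctx_red.intros head_subst basis_lift)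

lemma RR_subst: "RR t r \<Longrightarrow> basis s \<Longrightarrow> RR (subst t s k) (subst r s k)"
proof -
  assume a: "RR t r" "basis s"
  then obtain x y where "ac t x" "ctx_red (\<lambda>_. True) x y" "ac y r" unfolding step_def by blast
  then have "ac (subst t s k) (subst x s k)" "ctx_red (\<lambda>_. True) (subst x s k) (subst y s k)"
    "ac (subst y s k) (subst r s k)" using ac_subst ctx_subst a(2) by blast+
  then show ?thesis unfolding step_def by blast
qed

section \<open>parallel substitution\<close>

definition upS :: "(nat \<Rightarrow> 's tm) \<Rightarrow> nat \<Rightarrow> 's tm" where
  "upS \<sigma> = case_nat (Var 0) (\<lambda>i. lift (\<sigma> i) 0)"

fun psubst :: "(nat \<Rightarrow> 's tm) \<Rightarrow> 's tm \<Rightarrow> 's tm" where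
  "psubst \<sigma> (Var i) = \<sigma> i"
| "psubst \<sigma> (Lam t) = Lam (psubst (upS \<sigma>) t)"
| "psubst \<sigma> (App t u) = App (psubst \<sigma> t) (psubst \<sigma> u)"
| "psubst \<sigma> Zero = Zero"
| "psubst \<sigma> (Scal a t) = Scal a (psubst \<sigma> t)"
| "psubst \<sigma> (Plus t u) = Plus (psubst \<sigma> t) (psubst \<sigma> u)"

lemma upS_Var: "upS Var = Var"
  by (rule ext) (simp add: upS_def split: nat.split)

lemma psubst_Var: "psubst Var t = t"
  by (induction t) (auto simp: upS_Var)

lemma subst_psubst: "subst (psubst \<sigma> t) u k = psubst (\<lambda>i. subst (\<sigma> i) u k) t"
proof (induction t arbitrary: \<sigma> u k)
  case (Lam t)
  have "(\<lambda>i. subst (upS \<sigma> i) (lift u 0) (Suc k)) = upS (\<lambda>i. subst (\<sigma> i) u k)"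
    by (rule ext) (simp add: upS_def lift_subst_lt split: nat.split)
  then show ?case using Lam by simp
qed auto

lemma subst_psubst_upS: "subst (psubst (upS \<sigma>) t) u 0 = psubst (case_nat u \<sigma>) t"
proof -
  have "(\<lambda>i. subst (upS \<sigma> i) u 0) = case_nat u \<sigma>"
    by (rule ext) (simp add: upS_def split: nat.split)
  then show ?thesis by (simp add: subst_psubst)
qed

inductive sn :: "'s::comm_ring_1 tm \<Rightarrow> bool" where
  snI: "(\<And>r. RR t r \<Longrightarrow> sn r) \<Longrightarrow> sn t"

lemma sn_red: "sn t \<Longrightarrow> RR t r \<Longrightarrow> sn r"
  by (cases rule: sn.cases) auto

lemma sn_ac: "sn t \<Longrightarrow> ac t t' \<Longrightarrow> sn t'"
  by (rule snI) (rule sn_red, assumption, rule RR_acL)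

lemma sn_nochain: "sn t \<Longrightarrow> \<not> (\<exists>f. f 0 = t \<and> (\<forall>i. RR (f i) (f (Suc i))))"
proof (induction rule: sn.induct)
  case (snI t)
  show ?case
  proof
    assume "\<exists>f. f 0 = t \<and> (\<forall>i. RR (f i) (f (Suc i)))"
    then obtain f where f: "f 0 = t" "\<forall>i. RR (f i) (f (Suc i))" by blast
    then have "RR t (f 1)" by (metis One_nat_def)
    with snI.IH have "\<not> (\<exists>g. g 0 = f 1 \<and> (\<forall>i. RR (g i) (g (Suc i))))" by blast
    moreover have "\<exists>g. g 0 = f 1 \<and> (\<forall>i. RR (g i) (g (Suc i)))"
      by (rule exI[of _ "\<lambda>i. f (Suc i)"]) (use f(2) in simp)
    ultimately show False by blast
  qed
qed

lemma SN_of_sn: "sn t \<Longrightarrow> SN t"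
  unfolding SN_def using sn_nochain red_RR by blast

inductive isub :: "'s tm \<Rightarrow> 's tm \<Rightarrow> bool" where
  "isub t (Lam t)" | "isub t (App t u)" | "isub u (App t u)" | "isub t (Scal a t)"
| "isub t (Plus t u)" | "isub u (Plus t u)"

lemma isub_RR: "isub w u0 \<Longrightarrow> RR w v \<Longrightarrow> \<exists>u1. RR u0 u1 \<and> isub v u1"
proof (induction rule: isub.induct)
  case (1 t) show ?case by (intro exI conjI, rule RR_ctx(1)[OF 1], rule isub.intros)
next
  case (2 t u) show ?case by (intro exI conjI, rule RR_ctx(2)[OF 2], rule isub.intros)
next
  case (3 u t) show ?case by (intro exI conjI, rule RR_ctx(3)[OF 3], rule isub.intros)
next
  case (4 t a) show ?case by (intro exI conjI, rule RR_ctx(4)[OF 4], rule isub.intros)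
next
  case (5 t u) show ?case by (intro exI conjI, rule RR_ctx(5)[OF 5], rule isub.intros)
next
  case (6 u t) show ?case by (intro exI conjI, rule RR_ctx(6)[OF 6], rule isub.intros)
qed

lemma isub_ac: "isub w u0 \<Longrightarrow> ac w w0 \<Longrightarrow> \<exists>u1. ac u0 u1 \<and> isub w0 u1"
proof (induction rule: isub.induct)
  case (1 t) show ?case by (intro exI conjI, rule ac_Lam[OF 1], rule isub.intros)
next
  case (2 t u) show ?case by (intro exI conjI, rule ac_App[OF 2 ac_refl], rule isub.intros)
next
  case (3 u t) show ?case by (intro exI conjI, rule ac_App[OF ac_refl 3], rule isub.intros)
next
  case (4 t a) show ?case by (intro exI conjI, rule ac_Scal[OF 4], rule isub.intros)
next
  case (5 t u) show ?case by (intro exI conjI, rule ac_Plus[OF 5 ac_refl], rule isub.intros)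
next
  case (6 u t) show ?case by (intro exI conjI, rule ac_Plus[OF ac_refl 6], rule isub.intros)
qed

lemma isub_size: "isub v w \<Longrightarrow> tsize v < tsize w"
  by (induction rule: isub.induct) auto

lemma sn_isub: "sn x \<Longrightarrow> isub v x \<Longrightarrow> sn v"
proof (induction arbitrary: v rule: sn.induct)
  case (snI t)
  show ?case
  proof (rule sn.snI)
    fix r assume "RR v r"
    then obtain u1 where "RR t u1" "isub r u1" using isub_RR snI.prems by blast
    then show "sn r" using snI.IH by blast
  qed
qed

lemma sn_sub: "isub\<^sup>*\<^sup>* v x \<Longrightarrow> sn x \<Longrightarrow> sn v"
proof (induction rule: converse_rtranclp_induct)
  case base then show ?case .
next
  case (step y z) then show ?case using sn_isub by blast
qed

lemma subs_RR: "isub\<^sup>*\<^sup>* w u0 \<Longrightarrow> RR w v \<Longrightarrow> \<exists>u1. RR u0 u1 \<and> isub\<^sup>*\<^sup>* v u1"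
proof (induction rule: rtranclp_induct)
  case base then show ?case by blast
next
  case (step y z)
  then obtain b1 where "RR y b1" "isub\<^sup>*\<^sup>* v b1" by blast
  then obtain c1 where "RR z c1" "isub b1 c1" using isub_RR step(2) by blast
  then show ?case using \<open>isub\<^sup>*\<^sup>* v b1\<close> by (meson rtranclp.rtrancl_into_rtrancl)
qed

lemma subs_ac: "isub\<^sup>*\<^sup>* w u0 \<Longrightarrow> ac w w0 \<Longrightarrow> \<exists>u1. ac u0 u1 \<and> isub\<^sup>*\<^sup>* w0 u1"
proof (induction rule: rtranclp_induct)
  case base then show ?case by blast
next
  case (step y z)
  then obtain b1 where "ac y b1" "isub\<^sup>*\<^sup>* w0 b1" by blast
  then obtain c1 where "ac z c1" "isub b1 c1" using isub_ac step(2) by blast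
  then show ?case using \<open>isub\<^sup>*\<^sup>* w0 b1\<close> by (meson rtranclp.rtrancl_into_rtrancl)
qed

definition D :: "'s::comm_ring_1 tm \<Rightarrow> 's tm \<Rightarrow> bool" where
  "D l v \<longleftrightarrow> RR l v \<or> (\<exists>l0. ac l l0 \<and> isub v l0)"

abbreviation Acc :: "'s::comm_ring_1 tm \<Rightarrow> bool" where
  "Acc \<equiv> Wellfounded.accp (\<lambda>a b. D b a)"

lemma sn_Acc_aux:
  assumes "sn u"
  shows "\<forall>w. (\<exists>u0. ac u u0 \<and> isub\<^sup>*\<^sup>* w u0) \<longrightarrow> Acc w"
  using assms
proof (induction rule: sn.induct)
  case (snI u)
  show ?case
  proof (intro allI)
    fix w
    show "(\<exists>u0. ac u u0 \<and> isub\<^sup>*\<^sup>* w u0) \<longrightarrow> Acc w"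
    proof (induction w rule: measure_induct_rule[of tsize])
      case (less w)
      show ?case
      proof
        assume "\<exists>u0. ac u u0 \<and> isub\<^sup>*\<^sup>* w u0"
        then obtain u0 where u0: "ac u u0" "isub\<^sup>*\<^sup>* w u0" by blast
        show "Acc w"
        proof (rule Wellfounded.accp.accI)
          fix v assume "D w v"
          then have "RR w v \<or> (\<exists>l0. ac w l0 \<and> isub v l0)" unfolding D_def .
          then show "Acc v"
          proof (elim disjE exE conjE)
            assume "RR w v"
            then obtain u1 where u1: "RR u0 u1" "isub\<^sup>*\<^sup>* v u1" using subs_RR u0(2) by blast
            have "RR u u1" using RR_acL[OF u0(1) u1(1)] .
            then show "Acc v" using snI.IH u1(2) ac_refl by blast
          next
            fix w0 assume w0: "ac w w0" "isub v w0"
            obtain u1 where u1: "ac u0 u1" "isub\<^sup>*\<^sup>* w0 u1" using subs_ac[OF u0(2) w0(1)] by blast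
            have "isub\<^sup>*\<^sup>* v u1" using w0(2) u1(2) by (meson converse_rtranclp_into_rtranclp)
            moreover have "ac u u1" using ac_trans[OF u0(1) u1(1)] .
            moreover have "tsize v < tsize w" using isub_size[OF w0(2)] ac_tsize[OF w0(1)] by simp
            ultimately show "Acc v" using less by blast
          qed
        qed
      qed
    qed
  qed
qed

lemma sn_Acc: "sn u \<Longrightarrow> Acc u"
  using sn_Acc_aux ac_refl by blast

fun leaves :: "'s tm \<Rightarrow> 's tm multiset" where
  "leaves (Var i) = {#Var i#}"
| "leaves (Lam t) = {#Lam t#}"
| "leaves (App t u) = {#App t u#}"
| "leaves Zero = {#}"
| "leaves (Scal a t) = leaves t"
| "leaves (Plus t u) = leaves t + leaves u"

lemma leaf_sub: "l \<in># leaves t \<Longrightarrow> isub\<^sup>*\<^sup>* l t"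
proof (induction t)
  case (Scal a t) then show ?case by (auto intro: rtranclp.rtrancl_into_rtrancl isub.intros)
next
  case (Plus t u) then show ?case by (auto intro: rtranclp.rtrancl_into_rtrancl isub.intros)
qed auto

lemma leaf_hc: "l \<in># leaves t \<Longrightarrow> hc l \<le> 2"
  by (induction t) auto

lemma leaves_leaf: "hc t \<le> 2 \<Longrightarrow> leaves t = {#t#}"
  by (cases t) auto

fun mu :: "'s tm \<Rightarrow> nat" where
  "mu (Plus t u) = mu t + mu u + 2"
| "mu (Scal a t) = 2 * mu t + 1"
| "mu _ = 0"

lemma ac_mu: "ac x y \<Longrightarrow> mu x = mu y"
  by (induction rule: ac.induct) auto

definition cls :: "'s tm \<Rightarrow> 's tm set" where
  "cls t = Collect (ac t)"

lemma cls_eq: "cls a = cls b \<longleftrightarrow> ac a b"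
proof
  assume "cls a = cls b"
  then have "b \<in> cls a" using ac_refl[of b] unfolding cls_def by auto
  then show "ac a b" unfolding cls_def by simp
next
  assume ab: "ac a b"
  show "cls a = cls b"
  proof (rule set_eqI)
    fix x
    show "x \<in> cls a \<longleftrightarrow> x \<in> cls b" unfolding cls_def
      using ac_trans[OF ab, of x] ac_trans[OF ac_sym[OF ab], of x] by auto
  qed
qed

lemma ac_leaves: "ac x y \<Longrightarrow> image_mset cls (leaves x) = image_mset cls (leaves y)"
proof (induction rule: ac.induct)
  case (ac_Lam t r) then show ?case by (simp add: cls_eq ac.ac_Lam[OF ac_Lam(1)])
next
  case (ac_App t t' r r') then show ?case by (simp add: cls_eq ac.ac_App[OF ac_App(1,2)])
qed (simp_all add: ac_simps)

lemma ac_leaf_ex: "ac x y \<Longrightarrow> l \<in># leaves y \<Longrightarrow> \<exists>l0. l0 \<in># leaves x \<and> ac l0 l"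
proof -
  assume a: "ac x y" "l \<in># leaves y"
  then have "cls l \<in># image_mset cls (leaves x)" using ac_leaves[OF a(1)] by (metis image_eqI set_image_mset)
  then obtain l0 where "l0 \<in># leaves x" "cls l = cls l0" by auto
  then show ?thesis using cls_eq by (metis)
qed

lemma ctx_RR: "ctx_red (\<lambda>_. True) t r \<Longrightarrow> RR t r"
  unfolding step_def using ac_refl by blast

lemma ctx_leaves:
  "ctx_red (\<lambda>_. True) w1 w2 \<Longrightarrow>
    (leaves w2 \<subseteq># leaves w1 \<and> mu w2 < mu w1) \<or>
    (\<exists>l l2. l \<in># leaves w1 \<and> RR l l2 \<and> leaves w2 = leaves w1 - {#l#} + leaves l2)"
proof (induction rule: ctx_red.induct)
  case (c_head t r)
  then show ?case
  proof (cases rule: head_red.cases)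
    case (r_distl t1 r1 u)
    then show ?thesis using RR_head[OF c_head] by force
  next
    case (r_distr t1 r1 u)
    then show ?thesis using RR_head[OF c_head] by force
  next
    case (r_scall t1 a r1)
    then show ?thesis using RR_head[OF c_head] by force
  next
    case (r_scalr t1 r1 a)
    then show ?thesis using RR_head[OF c_head] by force
  next
    case (r_zerol t1)
    then show ?thesis using RR_head[OF c_head] by force
  next
    case (r_zeror t1)
    then show ?thesis using RR_head[OF c_head] by force
  next
    case (r_beta b t1)
    then show ?thesis using RR_head[OF c_head] by force
  qed auto
next
  case (c_Lam t r)
  then show ?case using RR_ctx(1)[OF ctx_RR[OF c_Lam(1)]] by force
next
  case (c_AppL t r u)
  then show ?case using RR_ctx(2)[OF ctx_RR[OF c_AppL(1)]] by force
next
  case (c_AppR t r u)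
  then show ?case using RR_ctx(3)[OF ctx_RR[OF c_AppR(1)]] by force
next
  case (c_Scal t r a)
  then show ?case by simp
next
  case (c_PlusL t r u)
  from c_PlusL.IH show ?case
  proof
    assume "leaves r \<subseteq># leaves t \<and> mu r < mu t"
    then show ?thesis by (simp add: subset_mset.add_right_mono)
  next
    assume "\<exists>l l2. l \<in># leaves t \<and> RR l l2 \<and> leaves r = leaves t - {#l#} + leaves l2"
    then obtain l l2 where "l \<in># leaves t" "RR l l2" "leaves r = leaves t - {#l#} + leaves l2" by blast
    moreover obtain T where "leaves t = add_mset l T" using multi_member_split[OF \<open>l \<in># leaves t\<close>] by blast
    ultimately have "l \<in># leaves (Plus t u) \<and> RR l l2 \<and> leaves (Plus r u) = leaves (Plus t u) - {#l#} + leaves l2"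
      by simp
    then show ?thesis by blast
  qed
next
  case (c_PlusR t r u)
  from c_PlusR.IH show ?case
  proof
    assume "leaves r \<subseteq># leaves t \<and> mu r < mu t"
    then show ?thesis by (simp add: subset_mset.add_left_mono)
  next
    assume "\<exists>l l2. l \<in># leaves t \<and> RR l l2 \<and> leaves r = leaves t - {#l#} + leaves l2"
    then obtain l l2 where "l \<in># leaves t" "RR l l2" "leaves r = leaves t - {#l#} + leaves l2" by blast
    moreover obtain T where "leaves t = add_mset l T" using multi_member_split[OF \<open>l \<in># leaves t\<close>] by blast
    ultimately have "l \<in># leaves (Plus u t) \<and> RR l l2 \<and> leaves (Plus u r) = leaves (Plus u t) - {#l#} + leaves l2"
      by simp
    then show ?thesis by blast
  qed
qed

definition ordC :: "('s::comm_ring_1 tm set \<times> 's tm set) set" where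
  "ordC = {(cls v, cls l) | l v. sn l \<and> D\<^sup>+\<^sup>+ l v}"

lemma D_acL: assumes "ac l l'" "D l' y" shows "D l y"
proof -
  from assms(2) have "RR l' y \<or> (\<exists>l0. ac l' l0 \<and> isub y l0)" unfolding D_def .
  then show ?thesis
  proof
    assume "RR l' y" then have "RR l y" by (rule RR_acL[OF assms(1)])
    then show ?thesis unfolding D_def by blast
  next
    assume "\<exists>l0. ac l' l0 \<and> isub y l0"
    then obtain l0 where "ac l' l0" "isub y l0" by blast
    moreover have "ac l l0" using ac_trans[OF assms(1) \<open>ac l' l0\<close>] .
    ultimately show ?thesis unfolding D_def by blast
  qed
qed

lemma isubs_D: "isub\<^sup>*\<^sup>* v l2 \<Longrightarrow> D\<^sup>*\<^sup>* l2 v"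
proof (induction rule: rtranclp_induct)
  case base then show ?case by simp
next
  case (step y z)
  have "D z y" unfolding D_def using step(2) ac_refl by blast
  then show ?case using step(3) by (meson converse_rtranclp_into_rtranclp)
qed

lemma acc_cls: "Acc l \<Longrightarrow> \<forall>v. D\<^sup>*\<^sup>* l v \<longrightarrow> cls v \<in> Wellfounded.acc ordC"
proof (induction rule: accp_induct_rule)
  case (1 x)
  have IH: "\<And>y. D x y \<Longrightarrow> \<forall>v. D\<^sup>*\<^sup>* y v \<longrightarrow> cls v \<in> Wellfounded.acc ordC"
    using 1(2) by simp
  have self: "cls x \<in> Wellfounded.acc ordC"
  proof (rule accI)
    fix Y assume "(Y, cls x) \<in> ordC"
    then obtain l' v' where lv: "Y = cls v'" "cls x = cls l'" "D\<^sup>+\<^sup>+ l' v'"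
      unfolding ordC_def by blast
    then have "ac x l'" using cls_eq[THEN iffD1, OF lv(2)] by simp
    obtain y where "D l' y" "D\<^sup>*\<^sup>* y v'" using tranclpD[OF lv(3)] by blast
    then have "D x y" using D_acL[OF \<open>ac x l'\<close>] by simp
    then show "Y \<in> Wellfounded.acc ordC" using IH \<open>D\<^sup>*\<^sup>* y v'\<close> lv(1) by simp
  qed
  show ?case
  proof (intro allI impI)
    fix v assume "D\<^sup>*\<^sup>* x v"
    then show "cls v \<in> Wellfounded.acc ordC"
    proof (cases rule: converse_rtranclpE)
      case base then show ?thesis using self by simp
    next
      case (step y) then show ?thesis using IH by simp
    qed
  qed
qed

lemma wf_ordC: "wf ordC"
proof -
  have "\<forall>X. X \<in> Wellfounded.acc ordC"
  proof
    fix X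
    show "X \<in> Wellfounded.acc ordC"
    proof (rule accI)
      fix Y assume "(Y, X) \<in> ordC"
      then obtain l v where lv: "Y = cls v" "X = cls l" "sn l" "D\<^sup>+\<^sup>+ l v" unfolding ordC_def by blast
      have "D\<^sup>*\<^sup>* l v" using tranclp_into_rtranclp[OF lv(4)] .
      then show "Y \<in> Wellfounded.acc ordC" using acc_cls[OF sn_Acc[OF lv(3)]] lv(1) by simp
    qed
  qed
  then show ?thesis by (rule acc_wfI)
qed

lemma leaf_sn_ac: assumes "\<forall>l\<in>#leaves w. sn l" "ac w w1" "l \<in># leaves w1" shows "sn l"
proof -
  obtain l0 where "l0 \<in># leaves w" "ac l0 l" using ac_leaf_ex[OF assms(2,3)] by blast
  then show ?thesis using sn_ac assms(1) by blast
qed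

definition fm :: "'s::comm_ring_1 tm \<Rightarrow> 's tm set multiset \<times> nat" where
  "fm w = (image_mset cls (leaves w), mu w)"

lemma fm_ac: assumes "ac x y" shows "fm x = fm y"
  unfolding fm_def using ac_leaves[OF assms] ac_mu[OF assms] by simp

lemma sum_sn_step:
  assumes lv: "\<forall>l\<in>#leaves w1. sn l" and c: "ctx_red (\<lambda>_. True) w1 w2"
  shows "(fm w2, fm w1) \<in> mult ordC <*lex*> less_than \<and> (\<forall>l\<in>#leaves w2. sn l)"
  using ctx_leaves[OF c]
proof
  assume a: "leaves w2 \<subseteq># leaves w1 \<and> mu w2 < mu w1"
  have "image_mset cls (leaves w2) \<subseteq># image_mset cls (leaves w1)"
    using a image_mset_subseteq_mono by blast
  then have "image_mset cls (leaves w2) = image_mset cls (leaves w1) \<or>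
      image_mset cls (leaves w2) \<subset># image_mset cls (leaves w1)"
    by (auto simp: subset_mset.le_less)
  then have "(fm w2, fm w1) \<in> mult ordC <*lex*> less_than"
    using a subset_implies_mult unfolding fm_def by auto
  moreover have "\<forall>l\<in>#leaves w2. sn l" using a lv by (meson mset_subset_eqD)
  ultimately show ?thesis by blast
next
  assume "\<exists>l l2. l \<in># leaves w1 \<and> RR l l2 \<and> leaves w2 = leaves w1 - {#l#} + leaves l2"
  then obtain l l2 where a: "l \<in># leaves w1" "RR l l2" "leaves w2 = leaves w1 - {#l#} + leaves l2" by blast
  obtain T where T: "leaves w1 = add_mset l T" using multi_member_split[OF a(1)] by blast
  have snl: "sn l" using lv a(1) by blast
  have snl2: "sn l2" using sn_red[OF snl a(2)] .
  have "(image_mset cls T + image_mset cls (leaves l2), image_mset cls T + {#cls l#}) \<in> mult ordC"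
  proof (rule one_step_implies_mult)
    show "{#cls l#} \<noteq> {#}" by simp
    show "\<forall>k\<in>#image_mset cls (leaves l2). \<exists>j\<in>#{#cls l#}. (k, j) \<in> ordC"
    proof
      fix k assume "k \<in># image_mset cls (leaves l2)"
      then obtain v where v: "v \<in># leaves l2" "k = cls v" by auto
      have "D l l2" unfolding D_def using a(2) by blast
      moreover have "D\<^sup>*\<^sup>* l2 v" using isubs_D[OF leaf_sub[OF v(1)]] .
      ultimately have "D\<^sup>+\<^sup>+ l v" by (meson rtranclp_into_tranclp2)
      then have "(k, cls l) \<in> ordC" unfolding ordC_def using snl v(2) by blast
      then show "\<exists>j\<in>#{#cls l#}. (k, j) \<in> ordC" by simp
    qed
  qed
  then have "(fm w2, fm w1) \<in> mult ordC <*lex*> less_than"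
    unfolding fm_def using T a(3) by (simp add: add.commute)
  moreover have "\<forall>x\<in>#leaves w2. sn x"
  proof
    fix x assume "x \<in># leaves w2"
    then have "x \<in># T \<or> x \<in># leaves l2" using a(3) T by simp
    then show "sn x"
    proof
      assume "x \<in># T" then show ?thesis using lv T by simp
    next
      assume "x \<in># leaves l2" then show ?thesis using sn_sub[OF leaf_sub snl2] by blast
    qed
  qed
  ultimately show ?thesis by blast
qed

definition sumrel :: "('s::comm_ring_1 tm \<times> 's tm) set" where
  "sumrel = inv_image (mult ordC <*lex*> less_than) fm"

lemma wf_sumrel: "wf sumrel"
  unfolding sumrel_def by (intro wf_inv_image wf_lex_prod wf_mult wf_ordC wf_less_than)

lemma sum_sn: "(\<forall>l\<in>#leaves w. sn l) \<Longrightarrow> sn w"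
proof (induction w rule: wf_induct_rule[OF wf_sumrel])
  case (1 w)
  show ?case
  proof (rule snI)
    fix r assume "RR w r"
    then obtain w1 w2 where w: "ac w w1" "ctx_red (\<lambda>_. True) w1 w2" "ac w2 r"
      unfolding step_def by blast
    have lv1: "\<forall>l\<in>#leaves w1. sn l" using leaf_sn_ac[OF "1.prems" w(1)] by blast
    from sum_sn_step[OF lv1 w(2)]
    have s: "(fm w2, fm w1) \<in> mult ordC <*lex*> less_than" "\<forall>l\<in>#leaves w2. sn l" by auto
    have lr: "\<forall>l\<in>#leaves r. sn l" using leaf_sn_ac[OF s(2) w(3)] by blast
    have "fm w = fm w1" "fm w2 = fm r" using fm_ac[OF w(1)] fm_ac[OF w(3)] by auto
    then have rel: "(r, w) \<in> sumrel" using s(1) unfolding sumrel_def by simp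
    show "sn r" by (rule "1.IH"[OF rel lr])
  qed
qed

definition neutral :: "'s tm \<Rightarrow> bool" where
  "neutral t \<longleftrightarrow> (\<exists>i. t = Var i) \<or> (\<exists>a b. t = App a b)"

definition cand :: "('s::comm_ring_1 tm \<Rightarrow> bool) \<Rightarrow> bool" where
  "cand C \<longleftrightarrow> (\<forall>t. C t \<longrightarrow> sn t) \<and> (\<forall>t r. C t \<longrightarrow> RR t r \<longrightarrow> C r)
     \<and> (\<forall>t t'. C t \<longrightarrow> ac t t' \<longrightarrow> C t') \<and> (\<forall>t. neutral t \<longrightarrow> (\<forall>r. RR t r \<longrightarrow> C r) \<longrightarrow> C t)
     \<and> (\<forall>t. C t \<longleftrightarrow> (\<forall>l\<in>#leaves t. C l))"

lemma cand_sn: "cand C \<Longrightarrow> C t \<Longrightarrow> sn t" unfolding cand_def by blast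
lemma cand_red: "cand C \<Longrightarrow> C t \<Longrightarrow> RR t r \<Longrightarrow> C r" unfolding cand_def by blast
lemma cand_ac: "cand C \<Longrightarrow> C t \<Longrightarrow> ac t t' \<Longrightarrow> C t'" unfolding cand_def by blast
lemma cand_neutral: "cand C \<Longrightarrow> neutral t \<Longrightarrow> (\<And>r. RR t r \<Longrightarrow> C r) \<Longrightarrow> C t" unfolding cand_def by blast
lemma cand_leaves: "cand C \<Longrightarrow> C t \<longleftrightarrow> (\<forall>l\<in>#leaves t. C l)" unfolding cand_def by blast

lemma cand_Zero: "cand C \<Longrightarrow> C Zero" using cand_leaves[of C Zero] by simp
lemma cand_Plus: "cand C \<Longrightarrow> C (Plus t r) \<longleftrightarrow> C t \<and> C r"
  using cand_leaves[of C "Plus t r"] cand_leaves[of C t] cand_leaves[of C r] by auto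
lemma cand_Scal: "cand C \<Longrightarrow> C (Scal a t) \<longleftrightarrow> C t"
  using cand_leaves[of C "Scal a t"] cand_leaves[of C t] by auto
lemma cand_Var: "cand C \<Longrightarrow> C (Var i)"
  by (rule cand_neutral) (auto simp: neutral_def RR_Var)

lemma leaves_red:
  assumes acC: "\<And>t t'. C t \<Longrightarrow> ac t t' \<Longrightarrow> C t'"
    and redC: "\<And>t r. C t \<Longrightarrow> RR t r \<Longrightarrow> C r"
    and lvC: "\<And>t l. C t \<Longrightarrow> l \<in># leaves t \<Longrightarrow> C l"
    and lw: "\<forall>l\<in>#leaves w. C l" and r: "RR w w'"
  shows "\<forall>l\<in>#leaves w'. C l"
proof -
  obtain w1 w2 where w: "ac w w1" "ctx_red (\<lambda>_. True) w1 w2" "ac w2 w'"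
    using r unfolding step_def by blast
  have l1: "\<forall>l\<in>#leaves w1. C l"
  proof
    fix l assume "l \<in># leaves w1"
    then obtain l0 where "l0 \<in># leaves w" "ac l0 l" using ac_leaf_ex[OF w(1)] by blast
    then show "C l" using acC lw by blast
  qed
  have l2: "\<forall>l\<in>#leaves w2. C l"
    using ctx_leaves[OF w(2)]
  proof
    assume "leaves w2 \<subseteq># leaves w1 \<and> mu w2 < mu w1"
    then show ?thesis using l1 by (meson mset_subset_eqD)
  next
    assume "\<exists>l l2. l \<in># leaves w1 \<and> RR l l2 \<and> leaves w2 = leaves w1 - {#l#} + leaves l2"
    then obtain l l2 where a: "l \<in># leaves w1" "RR l l2" "leaves w2 = leaves w1 - {#l#} + leaves l2" by blast
    have "C l2" using redC[OF _ a(2)] l1 a(1) by blast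
    then have "\<forall>x\<in>#leaves l2. C x" using lvC by blast
    moreover have "\<forall>x\<in>#leaves w1 - {#l#}. C x" using l1 by (meson in_diffD)
    ultimately show ?thesis using a(3) by auto
  qed
  show ?thesis
  proof
    fix l assume "l \<in># leaves w'"
    then obtain l0 where "l0 \<in># leaves w2" "ac l0 l" using ac_leaf_ex[OF w(3)] by blast
    then show "C l" using acC l2 by blast
  qed
qed

lemma cand_snset: "cand sn"
  unfolding cand_def
proof (intro conjI allI impI)
  fix t r assume "sn t" "RR t r" then show "sn r" by (rule sn_red)
next
  fix t t' assume "sn t" "ac t t'" then show "sn t'" by (rule sn_ac)
next
  fix t assume "\<forall>r. RR t r \<longrightarrow> sn r" then show "sn t" by (blast intro: snI)
next
  fix t show "sn t = (\<forall>l\<in>#leaves t. sn l)"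
    using sum_sn sn_sub leaf_sub by blast
qed

definition arrC :: "('s::comm_ring_1 tm \<Rightarrow> bool) \<Rightarrow> ('s tm \<Rightarrow> bool) \<Rightarrow> 's tm \<Rightarrow> bool" where
  "arrC A B t \<longleftrightarrow> (\<forall>u. A u \<longrightarrow> B (App t u))"

lemma D_isub: "ac u x \<Longrightarrow> isub y x \<Longrightarrow> D u y"
  unfolding D_def by blast

lemma D_RR: "RR u y \<Longrightarrow> D u y"
  unfolding D_def by blast

lemma hc_contra: "ac t x \<Longrightarrow> hc t \<noteq> hc x \<Longrightarrow> False"
  using ac_hc by blast

lemma Acc_D_induct:
  assumes "Acc u"
  and "\<And>u. (\<And>y. D u y \<Longrightarrow> P y) \<Longrightarrow> P u"
  shows "P u"
  using assms(1)
proof (induction rule: accp_induct_rule)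
  case (1 x) then show ?case using assms(2) by simp
qed

lemma arr_sn: "cand A \<Longrightarrow> cand B \<Longrightarrow> arrC A B t \<Longrightarrow> sn t"
proof -
  assume c: "cand A" "cand B" "arrC A B t"
  have "B (App t (Var 0))" using c cand_Var unfolding arrC_def by blast
  then have "sn (App t (Var 0))" using cand_sn[OF c(2)] by blast
  then show "sn t" using sn_isub isub.intros(2) by blast
qed

lemma arr_red: "cand B \<Longrightarrow> arrC A B t \<Longrightarrow> RR t r \<Longrightarrow> arrC A B r"
  unfolding arrC_def using cand_red RR_ctx(2) by blast

lemma arr_ac: "cand B \<Longrightarrow> arrC A B t \<Longrightarrow> ac t r \<Longrightarrow> arrC A B r"
  unfolding arrC_def using cand_ac ac_App ac_refl by blast

lemma arr_leaves_down:
  assumes cB: "cand B" and "arrC A B t" "l \<in># leaves t"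
  shows "arrC A B l"
  using assms(2,3)
proof (induction t)
  case (Scal a t)
  have "arrC A B t" unfolding arrC_def
  proof (intro allI impI)
    fix u assume "A u"
    then have "B (App (Scal a t) u)" using Scal.prems(1) unfolding arrC_def by blast
    moreover have "RR (App (Scal a t) u) (Scal a (App t u))" by (rule RR_head) (rule r_scall, simp)
    ultimately have "B (Scal a (App t u))" using cand_red[OF cB] by blast
    then show "B (App t u)" using cand_Scal[OF cB] by blast
  qed
  then show ?case using Scal by simp
next
  case (Plus t1 t2)
  have "arrC A B t1 \<and> arrC A B t2" unfolding arrC_def
  proof (intro conjI allI impI)
    fix u assume "A u"
    then have "B (App (Plus t1 t2) u)" using Plus.prems(1) unfolding arrC_def by blast
    moreover have "RR (App (Plus t1 t2) u) (Plus (App t1 u) (App t2 u))" by (rule RR_head) (rule r_distl, simp)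
    ultimately have "B (Plus (App t1 u) (App t2 u))" using cand_red[OF cB] by blast
    then show "B (App t1 u)" using cand_Plus[OF cB] by blast
  next
    fix u assume "A u"
    then have "B (App (Plus t1 t2) u)" using Plus.prems(1) unfolding arrC_def by blast
    moreover have "RR (App (Plus t1 t2) u) (Plus (App t1 u) (App t2 u))" by (rule RR_head) (rule r_distl, simp)
    ultimately have "B (Plus (App t1 u) (App t2 u))" using cand_red[OF cB] by blast
    then show "B (App t2 u)" using cand_Plus[OF cB] by blast
  qed
  then show ?case using Plus by auto
qed auto

lemma app_arg_cases:
  assumes cA: "cand A" and cB: "cand B"
  and Au: "A u"
  and IH: "\<And>y. D u y \<Longrightarrow> A y \<Longrightarrow> B (App t y)"
  shows "(\<exists>u'. RR u u' \<and> ac (App t u') r) \<Longrightarrow> B r"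
    and "(\<exists>u1 u2. ac u (Plus u1 u2) \<and> ac (Plus (App t u1) (App t u2)) r) \<Longrightarrow> B r"
    and "(\<exists>a u1. ac u (Scal a u1) \<and> ac (Scal a (App t u1)) r) \<Longrightarrow> B r"
    and "(ac u Zero \<and> ac Zero r) \<Longrightarrow> B r"
proof -
  assume "\<exists>u'. RR u u' \<and> ac (App t u') r"
  then obtain u' where a: "RR u u'" "ac (App t u') r" by blast
  have "B (App t u')" using IH[OF D_RR[OF a(1)] cand_red[OF cA Au a(1)]] .
  then show "B r" using cand_ac[OF cB _ a(2)] by blast
next
  assume "\<exists>u1 u2. ac u (Plus u1 u2) \<and> ac (Plus (App t u1) (App t u2)) r"
  then obtain u1 u2 where a: "ac u (Plus u1 u2)" "ac (Plus (App t u1) (App t u2)) r" by blast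
  have "A (Plus u1 u2)" using cand_ac[OF cA Au a(1)] .
  then have A12: "A u1" "A u2" using cand_Plus[OF cA, of u1 u2] by auto
  have D12: "D u u1" "D u u2" using D_isub[OF a(1) isub.intros(5)] D_isub[OF a(1) isub.intros(6)] by auto
  have "B (App t u1)" by (rule IH[OF D12(1) A12(1)])
  moreover have "B (App t u2)" by (rule IH[OF D12(2) A12(2)])
  ultimately have "B (App t u1)" "B (App t u2)" by blast+
  then have "B (Plus (App t u1) (App t u2))" using cand_Plus[OF cB, of "App t u1" "App t u2"] by auto
  then show "B r" using cand_ac[OF cB _ a(2)] by blast
next
  assume "\<exists>a u1. ac u (Scal a u1) \<and> ac (Scal a (App t u1)) r"
  then obtain a u1 where a: "ac u (Scal a u1)" "ac (Scal a (App t u1)) r" by blast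
  have "A (Scal a u1)" using cand_ac[OF cA Au a(1)] .
  then have A1: "A u1" using cand_Scal[OF cA, of a u1] by auto
  have D1: "D u u1" using D_isub[OF a(1) isub.intros(4)] .
  have "B (App t u1)" by (rule IH[OF D1 A1])
  then have "B (Scal a (App t u1))" using cand_Scal[OF cB, of a "App t u1"] by auto
  then show "B r" using cand_ac[OF cB _ a(2)] by blast
next
  assume "ac u Zero \<and> ac Zero r"
  then show "B r" using cand_ac[OF cB cand_Zero[OF cB]] by blast
qed

lemma arr_neutral:
  assumes cA: "cand A" and cB: "cand B" and nt: "neutral t"
  and red: "\<And>r. RR t r \<Longrightarrow> arrC A B r"
  shows "arrC A B t"
  unfolding arrC_def
proof (intro allI impI)
  fix u assume Au: "A u"
  have "Acc u" using sn_Acc[OF cand_sn[OF cA Au]] .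
  then have "A u \<longrightarrow> B (App t u)"
  proof (induction rule: accp_induct_rule)
    case (1 u)
    show ?case
    proof
      assume Au: "A u"
      have IH: "\<And>y. D u y \<Longrightarrow> A y \<Longrightarrow> B (App t y)" using 1(2) by simp
      have ht: "hc t = 0 \<or> hc t = 2" using nt unfolding neutral_def by auto
      show "B (App t u)"
      proof (rule cand_neutral[OF cB])
        show "neutral (App t u)" unfolding neutral_def by blast
      next
        fix r assume "RR (App t u) r"
        from app_red_cases[OF this] show "B r"
        proof (elim disjE)
          assume "\<exists>t'. RR t t' \<and> ac (App t' u) r"
          then obtain t' where a: "RR t t'" "ac (App t' u) r" by blast
          have "B (App t' u)" using red[OF a(1)] Au unfolding arrC_def by simp
          then show "B r" using cand_ac[OF cB _ a(2)] by blast
        next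
          assume "\<exists>t1 t2. ac t (Plus t1 t2) \<and> ac (Plus (App t1 u) (App t2 u)) r"
          then obtain t1 t2 where "ac t (Plus t1 t2)" by blast
          then show "B r" using ht ac_hc by force
        next
          assume "\<exists>a t1. ac t (Scal a t1) \<and> ac (Scal a (App t1 u)) r"
          then obtain a t1 where "ac t (Scal a t1)" by blast
          then show "B r" using ht ac_hc by force
        next
          assume "ac t Zero \<and> ac Zero r"
          then have "ac t Zero" by blast
          then show "B r" using ht ac_hc by force
        next
          assume "\<exists>t1 b. ac t (Lam t1) \<and> ac u b \<and> basis b \<and> ac (subst t1 b 0) r"
          then obtain t1 where "ac t (Lam t1)" by blast
          then show "B r" using ht ac_hc by force
        next
          assume H: "\<exists>u'. RR u u' \<and> ac (App t u') r"
          show "B r" by (rule app_arg_cases(1)[OF cA cB Au IH H])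
        next
          assume H: "\<exists>u1 u2. ac u (Plus u1 u2) \<and> ac (Plus (App t u1) (App t u2)) r"
          show "B r" by (rule app_arg_cases(2)[OF cA cB Au IH H])
        next
          assume H: "\<exists>a u1. ac u (Scal a u1) \<and> ac (Scal a (App t u1)) r"
          show "B r" by (rule app_arg_cases(3)[OF cA cB Au IH H])
        next
          assume H: "ac u Zero \<and> ac Zero r"
          show "B r" by (rule app_arg_cases(4)[OF cA cB Au IH H])
        qed
      qed
    qed
  qed
  then show "B (App t u)" using Au by blast
qed

lemma arr_leaves_up:
  assumes cA: "cand A" and cB: "cand B"
  shows "Acc w \<Longrightarrow> (\<forall>l\<in>#leaves w. arrC A B l) \<longrightarrow> arrC A B w"
proof (induction rule: accp_induct_rule)
  case (1 w)
  have OIH: "\<And>y. D w y \<Longrightarrow> (\<forall>l\<in>#leaves y. arrC A B l) \<Longrightarrow> arrC A B y" using 1(2) by simp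
  show ?case
  proof
    assume lw: "\<forall>l\<in>#leaves w. arrC A B l"
    show "arrC A B w"
    proof (cases "hc w \<le> 2")
      case True
      then show ?thesis using lw leaves_leaf[OF True] by simp
    next
      case False
      note hw = False
      have lvac: "\<And>x. ac w x \<Longrightarrow> \<forall>l\<in>#leaves x. arrC A B l"
      proof
        fix x l assume "ac w x" "l \<in># leaves x"
        then obtain l0 where "l0 \<in># leaves w" "ac l0 l" using ac_leaf_ex by blast
        then show "arrC A B l" using arr_ac[OF cB] lw by blast
      qed
      show ?thesis unfolding arrC_def
      proof (intro allI impI)
        fix u assume Au0: "A u"
        have "Acc u" using sn_Acc[OF cand_sn[OF cA Au0]] .
        then have "A u \<longrightarrow> B (App w u)"
        proof (induction rule: accp_induct_rule)
          case (1 u)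
          have IH: "\<And>y. D u y \<Longrightarrow> A y \<Longrightarrow> B (App w y)" using 1(2) by simp
          show ?case
          proof
            assume Au: "A u"
            show "B (App w u)"
            proof (rule cand_neutral[OF cB])
              show "neutral (App w u)" unfolding neutral_def by blast
            next
              fix r assume "RR (App w u) r"
              from app_red_cases[OF this] show "B r"
              proof (elim disjE)
                assume "\<exists>t'. RR w t' \<and> ac (App t' u) r"
                then obtain t' where a: "RR w t'" "ac (App t' u) r" by blast
                have lt': "\<forall>l\<in>#leaves t'. arrC A B l"
                proof (rule leaves_red[OF _ _ _ lw a(1)])
                  show "\<And>t t'. arrC A B t \<Longrightarrow> ac t t' \<Longrightarrow> arrC A B t'" using arr_ac[OF cB] by blast
                  show "\<And>t r. arrC A B t \<Longrightarrow> RR t r \<Longrightarrow> arrC A B r" using arr_red[OF cB] by blast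
                  show "\<And>t l. arrC A B t \<Longrightarrow> l \<in># leaves t \<Longrightarrow> arrC A B l" using arr_leaves_down[OF cB] by blast
                qed
                have "arrC A B t'" by (rule OIH[OF D_RR[OF a(1)] lt'])
                then have "B (App t' u)" using Au unfolding arrC_def by simp
                then show "B r" using cand_ac[OF cB _ a(2)] by blast
              next
                assume "\<exists>t1 t2. ac w (Plus t1 t2) \<and> ac (Plus (App t1 u) (App t2 u)) r"
                then obtain t1 t2 where a: "ac w (Plus t1 t2)" "ac (Plus (App t1 u) (App t2 u)) r" by blast
                have l12: "\<forall>l\<in>#leaves (Plus t1 t2). arrC A B l" using lvac[OF a(1)] .
                have "arrC A B t1" by (rule OIH[OF D_isub[OF a(1) isub.intros(5)]]) (use l12 in simp)
                moreover have "arrC A B t2" by (rule OIH[OF D_isub[OF a(1) isub.intros(6)]]) (use l12 in simp)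
                ultimately have "B (App t1 u)" "B (App t2 u)" using Au unfolding arrC_def by simp_all
                then have "B (Plus (App t1 u) (App t2 u))" using cand_Plus[OF cB, of "App t1 u" "App t2 u"] by auto
                then show "B r" using cand_ac[OF cB _ a(2)] by blast
              next
                assume "\<exists>a t1. ac w (Scal a t1) \<and> ac (Scal a (App t1 u)) r"
                then obtain b t1 where a: "ac w (Scal b t1)" "ac (Scal b (App t1 u)) r" by blast
                have l1: "\<forall>l\<in>#leaves (Scal b t1). arrC A B l" using lvac[OF a(1)] .
                have "arrC A B t1" by (rule OIH[OF D_isub[OF a(1) isub.intros(4)]]) (use l1 in simp)
                then have "B (App t1 u)" using Au unfolding arrC_def by simp
                then have "B (Scal b (App t1 u))" using cand_Scal[OF cB, of b "App t1 u"] by auto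
                then show "B r" using cand_ac[OF cB _ a(2)] by blast
              next
                assume "ac w Zero \<and> ac Zero r"
                then show "B r" using cand_ac[OF cB cand_Zero[OF cB]] by blast
              next
                assume "\<exists>t1 b. ac w (Lam t1) \<and> ac u b \<and> basis b \<and> ac (subst t1 b 0) r"
                then obtain t1 where "ac w (Lam t1)" by blast
                then show "B r" using hw ac_hc by force
              next
                assume H: "\<exists>u'. RR u u' \<and> ac (App w u') r"
                show "B r" by (rule app_arg_cases(1)[OF cA cB Au IH H])
              next
                assume H: "\<exists>u1 u2. ac u (Plus u1 u2) \<and> ac (Plus (App w u1) (App w u2)) r"
                show "B r" by (rule app_arg_cases(2)[OF cA cB Au IH H])
              next
                assume H: "\<exists>a u1. ac u (Scal a u1) \<and> ac (Scal a (App w u1)) r"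
                show "B r" by (rule app_arg_cases(3)[OF cA cB Au IH H])
              next
                assume H: "ac u Zero \<and> ac Zero r"
                show "B r" by (rule app_arg_cases(4)[OF cA cB Au IH H])
              qed
            qed
          qed
        qed
        then show "B (App w u)" using Au0 by blast
      qed
    qed
  qed
qed

lemma cand_arr:
  assumes cA: "cand A" and cB: "cand B"
  shows "cand (arrC A B)"
  unfolding cand_def
proof (intro conjI allI impI)
  fix t assume "arrC A B t" then show "sn t" using arr_sn[OF cA cB] by blast
next
  fix t r assume "arrC A B t" "RR t r" then show "arrC A B r" using arr_red[OF cB] by blast
next
  fix t t' assume "arrC A B t" "ac t t'" then show "arrC A B t'" using arr_ac[OF cB] by blast
next
  fix t assume "neutral t" "\<forall>r. RR t r \<longrightarrow> arrC A B r"
  then show "arrC A B t" using arr_neutral[OF cA cB] by blast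
next
  fix t
  show "arrC A B t = (\<forall>l\<in>#leaves t. arrC A B l)"
  proof
    assume "arrC A B t" then show "\<forall>l\<in>#leaves t. arrC A B l" using arr_leaves_down[OF cB] by blast
  next
    assume lt: "\<forall>l\<in>#leaves t. arrC A B l"
    then have "\<forall>l\<in>#leaves t. sn l" using arr_sn[OF cA cB] by blast
    then have "sn t" by (rule sum_sn)
    then have "Acc t" by (rule sn_Acc)
    then show "arrC A B t" using arr_leaves_up[OF cA cB] lt by blast
  qed
qed

lemma sn_subst_rev: "sn x \<Longrightarrow> basis s \<Longrightarrow> x = subst t s k \<Longrightarrow> sn t"
proof (induction arbitrary: t rule: sn.induct)
  case (snI x)
  show ?case
  proof (rule sn.snI)
    fix r assume "RR t r"
    then have "RR x (subst r s k)" using RR_subst[OF _ snI.prems(1)] snI.prems(2) by simp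
    then show "sn r" using snI.IH snI.prems(1) by blast
  qed
qed

lemma lam_lemma:
  assumes cA: "cand A" and cB: "cand B"
  and H: "\<forall>u. A u \<longrightarrow> basis u \<longrightarrow> B (subst t u 0)"
  shows "arrC A B (Lam t)"
proof -
  have "B (subst t (Var 0) 0)" using H cand_Var[OF cA] by simp
  then have "sn (subst t (Var 0) 0)" by (rule cand_sn[OF cB])
  then have snt: "sn t" using sn_subst_rev[of "subst t (Var 0) 0" "Var 0" t 0] by simp
  show ?thesis using snt H
  proof (induction arbitrary: rule: sn.induct)
    case (snI t)
    note H = snI.prems
    have OIH: "\<And>t'. RR t t' \<Longrightarrow> \<forall>u. A u \<longrightarrow> basis u \<longrightarrow> B (subst t' u 0) \<Longrightarrow> arrC A B (Lam t')"
      using snI.IH by blast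
    show ?case unfolding arrC_def
    proof (intro allI impI)
      fix u assume Au0: "A u"
      have "Acc u" using sn_Acc[OF cand_sn[OF cA Au0]] .
      then have "A u \<longrightarrow> B (App (Lam t) u)"
      proof (induction rule: accp_induct_rule)
        case (1 u)
        have IH: "\<And>y. D u y \<Longrightarrow> A y \<Longrightarrow> B (App (Lam t) y)" using 1(2) by simp
        show ?case
        proof
          assume Au: "A u"
          show "B (App (Lam t) u)"
          proof (rule cand_neutral[OF cB])
            show "neutral (App (Lam t) u)" unfolding neutral_def by blast
          next
            fix r assume "RR (App (Lam t) u) r"
            from app_red_cases[OF this] show "B r"
            proof (elim disjE)
              assume "\<exists>t'. RR (Lam t) t' \<and> ac (App t' u) r"
              then obtain t' where a: "RR (Lam t) t'" "ac (App t' u) r" by blast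
              obtain t'' where b: "RR t t''" "ac (Lam t'') t'" using RR_LamD[OF a(1)] by blast
              have "\<forall>u. A u \<longrightarrow> basis u \<longrightarrow> B (subst t'' u 0)"
              proof (intro allI impI)
                fix v assume "A v" "basis v"
                then have "B (subst t v 0)" using H by blast
                moreover have "RR (subst t v 0) (subst t'' v 0)" using RR_subst[OF b(1) \<open>basis v\<close>] .
                ultimately show "B (subst t'' v 0)" using cand_red[OF cB] by blast
              qed
              then have "arrC A B (Lam t'')" using OIH[OF b(1)] by blast
              then have "B (App (Lam t'') u)" using Au unfolding arrC_def by simp
              moreover have "ac (App (Lam t'') u) r" using ac_trans[OF ac_App[OF b(2) ac_refl] a(2)] .
              ultimately show "B r" using cand_ac[OF cB] by blast
            next
              assume "\<exists>t1 t2. ac (Lam t) (Plus t1 t2) \<and> ac (Plus (App t1 u) (App t2 u)) r"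
              then obtain t1 t2 where "ac (Lam t) (Plus t1 t2)" by blast
              then show "B r" using ac_hc by force
            next
              assume "\<exists>a t1. ac (Lam t) (Scal a t1) \<and> ac (Scal a (App t1 u)) r"
              then obtain a t1 where "ac (Lam t) (Scal a t1)" by blast
              then show "B r" using ac_hc by force
            next
              assume "ac (Lam t) Zero \<and> ac Zero r"
              then have "ac (Lam t) Zero" by blast
              then show "B r" using ac_hc by force
            next
              assume "\<exists>t1 b. ac (Lam t) (Lam t1) \<and> ac u b \<and> basis b \<and> ac (subst t1 b 0) r"
              then obtain t1 b where a: "ac (Lam t) (Lam t1)" "ac u b" "basis b" "ac (subst t1 b 0) r" by blast
              have "ac t t1" using ac_LamD[OF a(1)] by simp
              have "A b" using cand_ac[OF cA Au a(2)] .
              then have "B (subst t b 0)" using H a(3) by blast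
              moreover have "ac (subst t b 0) r" using ac_trans[OF ac_subst[OF \<open>ac t t1\<close>] a(4)] .
              ultimately show "B r" using cand_ac[OF cB] by blast
            next
              assume H: "\<exists>u'. RR u u' \<and> ac (App (Lam t) u') r"
              show "B r" by (rule app_arg_cases(1)[OF cA cB Au IH H])
            next
              assume H: "\<exists>u1 u2. ac u (Plus u1 u2) \<and> ac (Plus (App (Lam t) u1) (App (Lam t) u2)) r"
              show "B r" by (rule app_arg_cases(2)[OF cA cB Au IH H])
            next
              assume H: "\<exists>a u1. ac u (Scal a u1) \<and> ac (Scal a (App (Lam t) u1)) r"
              show "B r" by (rule app_arg_cases(3)[OF cA cB Au IH H])
            next
              assume H: "ac u Zero \<and> ac Zero r"
              show "B r" by (rule app_arg_cases(4)[OF cA cB Au IH H])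
            qed
          qed
        qed
      qed
      then show "B (App (Lam t) u)" using Au0 by blast
    qed
  qed
qed

definition ins :: "(nat \<Rightarrow> 'a) \<Rightarrow> nat \<Rightarrow> 'a \<Rightarrow> nat \<Rightarrow> 'a" where
  "ins \<rho> k X = (\<lambda>i. if i < k then \<rho> i else if i = k then X else \<rho> (i - 1))"

fun interp :: "(nat \<Rightarrow> 's::comm_ring_1 tm \<Rightarrow> bool) \<Rightarrow> ty \<Rightarrow> 's tm \<Rightarrow> bool" where
  "interp \<rho> (TVar i) = \<rho> i"
| "interp \<rho> (Arr A B) = arrC (interp \<rho> A) (interp \<rho> B)"
| "interp \<rho> (All A) = (\<lambda>t. \<forall>C. cand C \<longrightarrow> interp (ins \<rho> 0 C) A t)"

lemma ins_ins: "ins (ins \<rho> 0 C) (Suc k) X = ins (ins \<rho> k X) 0 C"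
proof (rule ext)
  fix i show "ins (ins \<rho> 0 C) (Suc k) X i = ins (ins \<rho> k X) 0 C i"
    by (cases i) (auto simp: ins_def)
qed

lemma interp_lift: "interp (ins \<rho> k X) (liftT k A) = interp \<rho> A"
proof (induction A arbitrary: \<rho> k)
  case (TVar i) then show ?case by (simp add: ins_def)
next
  case (Arr A B) then show ?case by simp
next
  case (All A)
  show ?case by (simp add: ins_ins[symmetric] All)
qed

lemma interp_subst: "interp \<rho> (substT A k B) = interp (ins \<rho> k (interp \<rho> B)) A"
proof (induction A arbitrary: \<rho> k B)
  case (TVar i) then show ?case by (simp add: ins_def)
next
  case (Arr A C) then show ?case by simp
next
  case (All A)
  have "\<And>C. interp (ins \<rho> 0 C) (liftT 0 B) = interp \<rho> B" by (rule interp_lift)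
  then show ?case by (simp add: All ins_ins)
qed

lemma cand_inter:
  fixes F :: "('s::comm_ring_1 tm \<Rightarrow> bool) \<Rightarrow> 's tm \<Rightarrow> bool"
  assumes cF: "\<And>C. cand C \<Longrightarrow> cand (F C)"
  shows "cand (\<lambda>t. \<forall>C. cand C \<longrightarrow> F C t)"
proof -
  let ?I = "\<lambda>t. \<forall>C. cand C \<longrightarrow> F C t"
  have h1: "\<forall>t. ?I t \<longrightarrow> sn t"
  proof (intro allI impI)
    fix t assume "?I t"
    then have "F sn t" using cand_snset by blast
    then show "sn t" using cand_sn[OF cF[OF cand_snset]] by blast
  qed
  have h2: "\<forall>t r. ?I t \<longrightarrow> RR t r \<longrightarrow> ?I r"
  proof (intro allI impI)
    fix t r and C :: "'s tm \<Rightarrow> bool" assume a: "?I t" "RR t r" "cand C"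
    then show "F C r" using cand_red[OF cF[OF \<open>cand C\<close>] _ a(2)] by blast
  qed
  have h3: "\<forall>t t'. ?I t \<longrightarrow> ac t t' \<longrightarrow> ?I t'"
  proof (intro allI impI)
    fix t t' and C :: "'s tm \<Rightarrow> bool" assume a: "?I t" "ac t t'" "cand C"
    then show "F C t'" using cand_ac[OF cF[OF \<open>cand C\<close>] _ a(2)] by blast
  qed
  have h4: "\<forall>t. neutral t \<longrightarrow> (\<forall>r. RR t r \<longrightarrow> ?I r) \<longrightarrow> ?I t"
  proof (intro allI impI)
    fix t and C :: "'s tm \<Rightarrow> bool" assume a: "neutral t" "\<forall>r. RR t r \<longrightarrow> ?I r" "cand C"
    then show "F C t" using cand_neutral[OF cF[OF \<open>cand C\<close>] a(1)] by blast
  qed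
  have h5: "\<forall>t. ?I t \<longleftrightarrow> (\<forall>l\<in>#leaves t. ?I l)"
  proof
    fix t
    have "\<And>C. cand C \<Longrightarrow> F C t = (\<forall>l\<in>#leaves t. F C l)" using cand_leaves[OF cF] by blast
    then show "?I t \<longleftrightarrow> (\<forall>l\<in>#leaves t. ?I l)" by blast
  qed
  show ?thesis by (subst cand_def, intro conjI, fact h1, fact h2, fact h3, fact h4, fact h5)
qed

lemma interp_cand:
  fixes \<rho> :: "nat \<Rightarrow> 's::comm_ring_1 tm \<Rightarrow> bool"
  shows "(\<forall>i. cand (\<rho> i)) \<Longrightarrow> cand (interp \<rho> A)"
proof (induction A arbitrary: \<rho>)
  case (TVar i) then show ?case by simp
next
  case (Arr A B) show ?case using cand_arr[OF Arr.IH(1)[OF Arr.prems] Arr.IH(2)[OF Arr.prems]] by simp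
next
  case (All A)
  have "\<And>C :: 's tm \<Rightarrow> bool. cand C \<Longrightarrow> cand (interp (ins \<rho> 0 C) A)"
  proof -
    fix C :: "'s tm \<Rightarrow> bool" assume "cand C"
    then have "\<forall>i. cand (ins \<rho> 0 C i)" using All.prems by (simp add: ins_def)
    then show "cand (interp (ins \<rho> 0 C) A)" by (rule All.IH)
  qed
  then show ?case using cand_inter[of "\<lambda>C. interp (ins \<rho> 0 C) A"] by simp
qed

lemma fundamental:
  "typing \<Gamma> t A \<Longrightarrow> (\<forall>i. cand (\<rho> i)) \<Longrightarrow> (\<forall>i<length \<Gamma>. interp \<rho> (\<Gamma> ! i) (\<sigma> i))
    \<Longrightarrow> interp \<rho> A (psubst \<sigma> (t :: 's::comm_ring_1 tm))"
proof (induction arbitrary: \<rho> \<sigma> rule: typing.induct)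
  case (t_var i \<Gamma>)
  then show ?case by simp
next
  case (t_lam A \<Gamma> t B)
  have cA: "cand (interp \<rho> A)" and cB: "cand (interp \<rho> B)" using interp_cand t_lam.prems(1) by blast+
  have "\<forall>u. interp \<rho> A u \<longrightarrow> basis u \<longrightarrow> interp \<rho> B (subst (psubst (upS \<sigma>) t) u 0)"
  proof (intro allI impI)
    fix u assume "interp \<rho> A u" "basis u"
    have "\<forall>i<length (A # \<Gamma>). interp \<rho> ((A # \<Gamma>) ! i) (case_nat u \<sigma> i)"
      using t_lam.prems(2) \<open>interp \<rho> A u\<close> by (auto simp: nth_Cons split: nat.split)
    then have "interp \<rho> B (psubst (case_nat u \<sigma>) t)" using t_lam.IH t_lam.prems(1) by blast
    then show "interp \<rho> B (subst (psubst (upS \<sigma>) t) u 0)" by (simp add: subst_psubst_upS)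
  qed
  then show ?case using lam_lemma[OF cA cB] by simp
next
  case (t_app \<Gamma> t A B r)
  then show ?case unfolding interp.simps arrC_def by simp
next
  case (t_allE \<Gamma> t A B)
  have "cand (interp \<rho> B)" using interp_cand t_allE.prems(1) by blast
  then have "interp (ins \<rho> 0 (interp \<rho> B)) A (psubst \<sigma> t)" using t_allE by simp
  then show ?case by (simp add: interp_subst)
next
  case (t_allI \<Gamma> t A)
  show ?case unfolding interp.simps
  proof (intro allI impI)
    fix C :: "'s tm \<Rightarrow> bool" assume "cand C"
    then have c: "\<forall>i. cand (ins \<rho> 0 C i)" using t_allI.prems(1) by (simp add: ins_def)
    have "\<forall>i<length (map (liftT 0) \<Gamma>). interp (ins \<rho> 0 C) (map (liftT 0) \<Gamma> ! i) (\<sigma> i)"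
      using t_allI.prems(2) by (simp add: interp_lift)
    then show "interp (ins \<rho> 0 C) A (psubst \<sigma> t)" using t_allI.IH c by blast
  qed
next
  case (t_zero \<Gamma> A)
  show ?case using cand_Zero[OF interp_cand[OF t_zero.prems(1)]] by simp
next
  case (t_plus \<Gamma> t A r)
  have c: "cand (interp \<rho> A)" using interp_cand t_plus.prems(1) by blast
  have "interp \<rho> A (psubst \<sigma> t)" "interp \<rho> A (psubst \<sigma> r)" using t_plus.IH t_plus.prems by blast+
  then show ?case using cand_Plus[OF c] by simp
next
  case (t_scal \<Gamma> t A a)
  have c: "cand (interp \<rho> A)" using interp_cand t_scal.prems(1) by blast
  have "interp \<rho> A (psubst \<sigma> t)" using t_scal.IH t_scal.prems by blast
  then show ?case using cand_Scal[OF c] by simp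
qed

theorem mainTheorem3:
  fixes \<Gamma> :: "ty list" and t :: "'s::comm_ring_1 tm" and A :: ty
  assumes "typing \<Gamma> t A"
  shows "SN t"
proof -
  let ?\<rho> = "\<lambda>_::nat. sn :: 's tm \<Rightarrow> bool"
  have c: "\<forall>i. cand (?\<rho> i)" using cand_snset by simp
  have "\<forall>i<length \<Gamma>. interp ?\<rho> (\<Gamma> ! i) (Var i)"
    using interp_cand[OF c] cand_Var by blast
  then have "interp ?\<rho> A (psubst Var t)" using fundamental[OF assms c] by blast
  then have "interp ?\<rho> A t" by (simp add: psubst_Var)
  then have "sn t" using cand_sn[OF interp_cand[OF c]] by blast
  then show ?thesis by (rule SN_of_sn)
qed

end
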